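(* On the event $\mathbb{G}_1$, for all episodes $k$, steps $h\in[H]$, states $s$, $B\in[\ell_h]$ and lookahead information $I$, it holds that $\mathfrak{Q}^*_h(s,B;I,V^*_{h+B})\le\mathfrak{Q}^*_h(s,B;I,\bar V^k_{h+B})$; in particular $V^*_h(s)\le\bar V^k_h(s)$.
   Context: Setting: episodic tabular MDP with $S$ states, horizon $H$, rewards in $[0,1]$, unknown distributions independent across time steps. Fix $\ell\ge1$, $\ell_h=\min\{\ell,H-h+1\}$. $I_{h,B}(s)$ is $B$-step lookahead information from $s$ at step $h$ (realized rewards and next states of all state-action pairs reachable from $s$ at steps $h,\dots,h+B-1$), with distribution $\mathcal{I}_{h,B}(s)$. For deterministic Markov $\phi$, $\mathfrak{R}_{t\mid h}(s,\phi,I)$, $\mathfrak{s}_{t\mid h}(s,\phi,I)$ are the reward/state at step $t$ from $s_h=s$ following $\phi$ under $I$; $\mathfrak{Q}^*_h(s,B;I,V)=\max_\phi\{\sum_{t=h}^{h+B-1}\mathfrak{R}_{t\mid h}(s,\phi,I)+V(\mathfrak{s}_{h+B\mid h}(s,\phi,I))\}$. $V^*_h$ is the optimal value of adaptive batching policies, with $V^*_{H+1}\equiv0$, $V^*_h(s)=\max_{B\in[\ell_h]}Q^*_h(s,B)$, $Q^*_h(s,B)=\mathbb{E}_{I\sim\mathcal{I}_{h,B}(s)}[\mathfrak{Q}^*_h(s,B;I,V^*_{h+B})]$, and $\mathrm{Var}^*_h(s,B)$ the variance of $\mathfrak{Q}^*_h(s,B;I,V^*_{h+B})$ under $I\sim\mathcal{I}_{h,B}(s)$.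 AL-UCB notation: $n^k_h(s,B)$ is the number of episodes before $k$ in which a batch with horizon $B$ started at step $h$ in state $s$; $\widehat{\mathbb{E}}^k_{h,s,B}[f(I)]$ is the average of $f$ over the lookahead observed in those episodes (0 if none); $\widehat{\mathrm{Var}}^k_h(s,B;V)$ the corresponding empirical variance of $\mathfrak{Q}^*_h(s,B;I,V)$; $L^k_\delta=\ln\frac{18SH\ell k^3(k+1)}{\delta}$. The optimistic values are $\bar V^k_{H+1}\equiv0$, $b^k_h(s,B)=\sqrt{\frac{8\widehat{\mathrm{Var}}^k_h(s,B;\bar V^k_{h+B})L^k_\delta}{n^k_h(s,B)\vee1}}+\frac{11HL^k_\delta}{n^k_h(s,B)\vee1}$, $\bar Q^k_h(s,B)=\min\{\widehat{\mathbb{E}}^k_{h,s,B}[\mathfrak{Q}^*_h(s,B;I,\bar V^k_{h+B})]+b^k_h(s,B),H-h+1\}$, $\bar V^k_h(s)=\max_{B\in[\ell_h]}\bar Q^k_h(s,B)$. The event $\mathbb{G}_1$ is the intersection over all $k\ge1$ of: (i) for all $s,h,B$: $|Q^*_h(s,B)-\widehat{\mathbb{E}}^k_{h,s,B}[\mathfrak{Q}^*_h(s,B;I,V^*_{h+B})]|\le\sqrt{2\mathrm{Var}^*_h(s,B)L^k_\delta/(n^k_h(s,B)\vee1)}+HL^k_\delta/(n^k_h(s,B)\vee1)$; (ii) for all $s,h,B$: $|\sqrt{\widehat{\mathrm{Var}}^k_h(s,B;V^*_{h+B})}-\sqrt{\mathrm{Var}^*_h(s,B)}|\le4H\sqrt{L^k_\delta/(n^k_h(s,B)\vee1)}$;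 (iii) for all $s,h,B$ and all $V$ with $V^*_{h+B}\le V\le H$ componentwise: $\widehat{\mathbb{E}}^k_{h,s,B}[\mathfrak{Q}^*_h(s,B;I,V)-\mathfrak{Q}^*_h(s,B;I,V^*_{h+B})]\le(1+\frac{1}{2H})\mathbb{E}_{I\sim\mathcal{I}_{h,B}(s)}[\mathfrak{Q}^*_h(s,B;I,V)-\mathfrak{Q}^*_h(s,B;I,V^*_{h+B})]+\frac{4H^2SL^k_\delta}{n^k_h(s,B)\vee1}$. *)

theory Defs
  imports "HOL-Probability.Probability"
begin

text \<open>Realisation of one step of the environment: for every state s and action a,
  the realised reward (first component) and next state (second component).
  A (full) lookahead realisation assigns such a realisation to every time step t.\<close>
type_synonym ('s, 'a) step_real = "'s \<Rightarrow> 'a \<Rightarrow> real \<times> 's"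
type_synonym ('s, 'a) lk = "nat \<Rightarrow> ('s, 'a) step_real"

type_synonym ('s, 'a) policy = "nat \<Rightarrow> 's \<Rightarrow> 'a"

primrec traj :: "('s, 'a) lk \<Rightarrow> ('s, 'a) policy \<Rightarrow> nat \<Rightarrow> 's \<Rightarrow> nat \<Rightarrow> 's" where
  "traj I \<phi> h s 0 = s"
| "traj I \<phi> h s (Suc j) =
     snd (I (h + j) (traj I \<phi> h s j) (\<phi> (h + j) (traj I \<phi> h s j)))"

definition rew :: "('s, 'a) lk \<Rightarrow> ('s, 'a) policy \<Rightarrow> nat \<Rightarrow> 's \<Rightarrow> nat \<Rightarrow> real" where
  "rew I \<phi> h s j = fst (I (h + j) (traj I \<phi> h s j) (\<phi> (h + j) (traj I \<phi> h s j)))"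

definition lkQ :: "('s::finite, 'a::finite) lk \<Rightarrow> nat \<Rightarrow> nat \<Rightarrow> ('s \<Rightarrow> real) \<Rightarrow> 's \<Rightarrow> real" where
  "lkQ I h B V s =
     Max ((\<lambda>\<phi>. (\<Sum>j<B. rew I \<phi> h s j) + V (traj I \<phi> h s B)) ` UNIV)"

text \<open>Backward induction over the remaining number of steps d = H+1-h.
  vtab F l H d j gives the value function at step H+1-j (for j \<le> d), where
  F h B W s is the Q-value of batch B at (h,s) given next value function W = V_(h+B).\<close>
primrec vtab :: "(nat \<Rightarrow> nat \<Rightarrow> ('s \<Rightarrow> real) \<Rightarrow> 's \<Rightarrow> real) \<Rightarrow> nat \<Rightarrow> nat \<Rightarrow> nat
                   \<Rightarrow> nat \<Rightarrow> 's \<Rightarrow> real" where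
  "vtab F l H 0 = (\<lambda>j s. 0)"
| "vtab F l H (Suc d) = (vtab F l H d)(Suc d := (\<lambda>s.
      Max ((\<lambda>B. F (H - d) B (vtab F l H d (Suc d - B)) s) ` {1..min l (Suc d)})))"

text \<open>Value function at step h (1 \<le> h \<le> H+1): V_(H+1) = 0 and
  V_h(s) = max_{B \<in> [l_h]} F h B V_(h+B) s with l_h = min l (H-h+1).\<close>
definition bvalue :: "(nat \<Rightarrow> nat \<Rightarrow> ('s \<Rightarrow> real) \<Rightarrow> 's \<Rightarrow> real) \<Rightarrow> nat \<Rightarrow> nat
                        \<Rightarrow> nat \<Rightarrow> 's \<Rightarrow> real" where
  "bvalue F l H h = vtab F l H (H + 1 - h) (H + 1 - h)"

definition ell_h :: "nat \<Rightarrow> nat \<Rightarrow> nat \<Rightarrow> nat" where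
  "ell_h l H h = min l (H - h + 1)"

definition Idist :: "(nat \<Rightarrow> ('s, 'a) step_real measure) \<Rightarrow> nat \<Rightarrow> nat \<Rightarrow> ('s, 'a) lk measure" where
  "Idist D h B = PiM {h..<h + B} D"

definition Vstar :: "(nat \<Rightarrow> ('s::finite, 'a::finite) step_real measure) \<Rightarrow> nat \<Rightarrow> nat
                       \<Rightarrow> nat \<Rightarrow> 's \<Rightarrow> real" where
  "Vstar D l H = bvalue (\<lambda>h B W s. \<integral>I. lkQ I h B W s \<partial>(Idist D h B)) l H"

definition Qstar :: "(nat \<Rightarrow> ('s::finite, 'a::finite) step_real measure) \<Rightarrow> nat \<Rightarrow> nat
                       \<Rightarrow> nat \<Rightarrow> 's \<Rightarrow> nat \<Rightarrow> real" where
  "Qstar D l H h s B = (\<integral>I. lkQ I h B (Vstar D l H (h + B)) s \<partial>(Idist D h B))"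

definition VarStar :: "(nat \<Rightarrow> ('s::finite, 'a::finite) step_real measure) \<Rightarrow> nat \<Rightarrow> nat
                       \<Rightarrow> nat \<Rightarrow> 's \<Rightarrow> nat \<Rightarrow> real" where
  "VarStar D l H h s B = (\<integral>I. (lkQ I h B (Vstar D l H (h + B)) s - Qstar D l H h s B)\<^sup>2
                             \<partial>(Idist D h B))"

text \<open>Empirical mean (0 on the empty list) and empirical variance.\<close>
definition emp :: "('i \<Rightarrow> real) \<Rightarrow> 'i list \<Rightarrow> real" where
  "emp f xs = (\<Sum>x\<leftarrow>xs. f x) / real (length xs)"

definition empVar :: "('i \<Rightarrow> real) \<Rightarrow> 'i list \<Rightarrow> real" where
  "empVar f xs = emp (\<lambda>x. (f x - emp f xs)\<^sup>2) xs"

text \<open>obs k h s B: the lookahead information observed in the episodes before k in which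
  a batch of horizon B was started at step h in state s; n^k_h(s,B) is its length.\<close>
definition Lk :: "nat \<Rightarrow> nat \<Rightarrow> nat \<Rightarrow> nat \<Rightarrow> real \<Rightarrow> real" where
  "Lk S H l k \<delta> = ln (18 * real S * real H * real l * real k ^ 3 * real (k + 1) / \<delta>)"

definition bonus :: "(nat \<Rightarrow> nat \<Rightarrow> 's::finite \<Rightarrow> nat \<Rightarrow> ('s, 'a::finite) lk list)
                     \<Rightarrow> nat \<Rightarrow> nat \<Rightarrow> real \<Rightarrow> nat \<Rightarrow> nat \<Rightarrow> 's \<Rightarrow> nat \<Rightarrow> ('s \<Rightarrow> real) \<Rightarrow> real" where
  "bonus obs l H \<delta> k h s B W =
     (let n = real (max (length (obs k h s B)) 1); L = Lk CARD('s) H l k \<delta> in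
      sqrt (8 * empVar (\<lambda>I. lkQ I h B W s) (obs k h s B) * L / n) + 11 * real H * L / n)"

definition Qbar_of :: "(nat \<Rightarrow> nat \<Rightarrow> 's::finite \<Rightarrow> nat \<Rightarrow> ('s, 'a::finite) lk list)
                     \<Rightarrow> nat \<Rightarrow> nat \<Rightarrow> real \<Rightarrow> nat \<Rightarrow> nat \<Rightarrow> nat \<Rightarrow> ('s \<Rightarrow> real) \<Rightarrow> 's \<Rightarrow> real" where
  "Qbar_of obs l H \<delta> k h B W s =
     min (emp (\<lambda>I. lkQ I h B W s) (obs k h s B) + bonus obs l H \<delta> k h s B W)
         (real H - real h + 1)"

definition Vbar :: "(nat \<Rightarrow> nat \<Rightarrow> 's::finite \<Rightarrow> nat \<Rightarrow> ('s, 'a::finite) lk list)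
                     \<Rightarrow> nat \<Rightarrow> nat \<Rightarrow> real \<Rightarrow> nat \<Rightarrow> nat \<Rightarrow> 's \<Rightarrow> real" where
  "Vbar obs l H \<delta> k = bvalue (Qbar_of obs l H \<delta> k) l H"

definition G1 :: "(nat \<Rightarrow> ('s::finite, 'a::finite) step_real measure)
                  \<Rightarrow> (nat \<Rightarrow> nat \<Rightarrow> 's \<Rightarrow> nat \<Rightarrow> ('s, 'a) lk list)
                  \<Rightarrow> nat \<Rightarrow> nat \<Rightarrow> real \<Rightarrow> bool" where
  "G1 D obs l H \<delta> \<longleftrightarrow>
    (\<forall>k\<ge>1. \<forall>h\<in>{1..H}. \<forall>s. \<forall>B\<in>{1..ell_h l H h}.
       (let n = real (max (length (obs k h s B)) 1); L = Lk CARD('s) H l k \<delta>;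
            Vs = Vstar D l H (h + B) in
        \<bar>Qstar D l H h s B - emp (\<lambda>I. lkQ I h B Vs s) (obs k h s B)\<bar>
           \<le> sqrt (2 * VarStar D l H h s B * L / n) + real H * L / n
        \<and> \<bar>sqrt (empVar (\<lambda>I. lkQ I h B Vs s) (obs k h s B)) - sqrt (VarStar D l H h s B)\<bar>
           \<le> 4 * real H * sqrt (L / n)
        \<and> (\<forall>V. (\<forall>x. Vs x \<le> V x \<and> V x \<le> real H) \<longrightarrow>
             emp (\<lambda>I. lkQ I h B V s - lkQ I h B Vs s) (obs k h s B)
             \<le> (1 + 1 / (2 * real H)) *
                 (\<integral>I. lkQ I h B V s - lkQ I h B Vs s \<partial>(Idist D h B))
               + 4 * (real H)\<^sup>2 * real CARD('s) * L / n)))"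

end

theory Submission
  imports Defs
begin


lemma traj_cong:
  "(\<forall>t\<in>{h..<h+j}. \<phi> t = \<psi> t) \<Longrightarrow> traj I \<phi> h s j = traj I \<psi> h s j"
  by (induction j) auto

definition lkf :: "('s, 'a) lk \<Rightarrow> nat \<Rightarrow> nat \<Rightarrow> ('s \<Rightarrow> real) \<Rightarrow> 's \<Rightarrow> ('s, 'a) policy \<Rightarrow> real" where
  "lkf I h B V s \<phi> = (\<Sum>j<B. rew I \<phi> h s j) + V (traj I \<phi> h s B)"

lemma lkf_cong:
  assumes "\<forall>t\<in>{h..<h+B}. \<phi> t = \<psi> t"
  shows "lkf I h B V s \<phi> = lkf I h B V s \<psi>"
proof -
  have "rew I \<phi> h s j = rew I \<psi> h s j" if "j < B" for j
  proof -
    have tj: "traj I \<phi> h s j = traj I \<psi> h s j" by (rule traj_cong) (use that assms in auto)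
    have "\<phi> (h+j) = \<psi> (h+j)" using that assms by auto
    then show ?thesis by (simp add: rew_def tj)
  qed
  moreover have "traj I \<phi> h s B = traj I \<psi> h s B" by (rule traj_cong) (use assms in auto)
  ultimately show ?thesis unfolding lkf_def by simp
qed

lemma lkf_image:
  "lkf I h B V s ` UNIV = lkf I h B V s ` (PiE {h..<h+B} (\<lambda>_. UNIV))"
proof
  show "lkf I h B V s ` UNIV \<subseteq> lkf I h B V s ` (PiE {h..<h+B} (\<lambda>_. UNIV))"
  proof
    fix y assume "y \<in> lkf I h B V s ` UNIV"
    then obtain \<phi> where y: "y = lkf I h B V s \<phi>" by auto
    have "restrict \<phi> {h..<h+B} \<in> PiE {h..<h+B} (\<lambda>_. UNIV)" by auto
    moreover have "lkf I h B V s \<phi> = lkf I h B V s (restrict \<phi> {h..<h+B})"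
      by (rule lkf_cong) auto
    ultimately show "y \<in> lkf I h B V s ` (PiE {h..<h+B} (\<lambda>_. UNIV))" using y by blast
  qed
qed auto

lemma lkf_finite: "finite (lkf (I :: ('s::finite, 'a::finite) lk) h B V s ` UNIV)"
  by (subst lkf_image) (intro finite_imageI finite_PiE; simp)

lemma lkQ_alt: "lkQ I h B V s = Max (lkf I h B V s ` UNIV)"
  unfolding lkQ_def lkf_def ..

lemma lkQ_ge: "lkf I h B V s \<phi> \<le> lkQ I h B V s"
  unfolding lkQ_alt by (rule Max_ge[OF lkf_finite]) auto

lemma lkQ_le:
  assumes "\<And>\<phi>. lkf I h B V s \<phi> \<le> c"
  shows "lkQ I h B V s \<le> c"
  unfolding lkQ_alt using assms lkf_finite by (subst Max_le_iff) auto

lemma lkQ_mono: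
  assumes "\<And>x. V x \<le> W x"
  shows "lkQ I h B V s \<le> lkQ I h B W s"
proof (rule lkQ_le)
  fix \<phi>
  have "lkf I h B V s \<phi> \<le> lkf I h B W s \<phi>" using assms by (simp add: lkf_def)
  also have "\<dots> \<le> lkQ I h B W s" by (rule lkQ_ge)
  finally show "lkf I h B V s \<phi> \<le> lkQ I h B W s" .
qed

lemma lkQ_diff:
  assumes "\<And>x. W x \<le> V x + c"
  shows "lkQ I h B W s - lkQ I h B V s \<le> c"
proof -
  have "lkQ I h B W s \<le> lkQ I h B V s + c"
  proof (rule lkQ_le)
    fix \<phi>
    have "lkf I h B W s \<phi> \<le> lkf I h B V s \<phi> + c" using assms by (simp add: lkf_def)
    also have "\<dots> \<le> lkQ I h B V s + c" using lkQ_ge by simp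
    finally show "lkf I h B W s \<phi> \<le> lkQ I h B V s + c" .
  qed
  then show ?thesis by simp
qed

lemma lkQ_upper:
  assumes "\<And>t x a. t \<in> {h..<h+B} \<Longrightarrow> fst (I t x a) \<le> 1" "\<And>x. V x \<le> c"
  shows "lkQ I h B V s \<le> real B + c"
proof (rule lkQ_le)
  fix \<phi>
  have "rew I \<phi> h s j \<le> 1" if "j \<in> {..<B}" for j
    unfolding rew_def by (rule assms(1)) (use that in simp)
  then have "(\<Sum>j<B. rew I \<phi> h s j) \<le> (\<Sum>j<B. 1)"
    by (rule sum_mono)
  then show "lkf I h B V s \<phi> \<le> real B + c" using assms(2) by (simp add: lkf_def add_mono)
qed

lemma lkQ_lower:
  assumes "\<And>t x a. t \<in> {h..<h+B} \<Longrightarrow> 0 \<le> fst (I t x a)" "\<And>x. 0 \<le> V x"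
  shows "0 \<le> lkQ I h B V s"
proof -
  have "0 \<le> rew I \<phi> h s j" if "j \<in> {..<B}" for j \<phi>
    unfolding rew_def by (rule assms(1)) (use that in simp)
  then have "(\<Sum>j<B. 0) \<le> (\<Sum>j<B. rew I \<phi> h s j)" for \<phi>
    by (intro sum_mono)
  then have "0 \<le> lkf I h B V s \<phi>" for \<phi> using assms(2)[of "traj I \<phi> h s B"] by (simp add: lkf_def)
  then show ?thesis using lkQ_ge order_trans by blast
qed



lemma vtab_stable: "j \<le> d \<Longrightarrow> vtab F l H d j = vtab F l H j j"
  by (induction d) (auto simp: le_Suc_eq)

lemma bvalue_end: "bvalue F l H (H+1) = (\<lambda>s. 0)"
  by (simp add: bvalue_def)

lemma bvalue_rec:
  assumes "1 \<le> h" "h \<le> H"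
  shows "bvalue F l H h s = Max ((\<lambda>B. F h B (bvalue F l H (h+B)) s) ` {1..ell_h l H h})"
proof -
  define d where "d = H - h"
  have e: "H + 1 - h = Suc d" "H - d = h" "Suc H - h = Suc d" "ell_h l H h = min l (Suc d)"
    using assms by (auto simp: d_def ell_h_def)
  have "bvalue F l H h s = Max ((\<lambda>B. F (H - d) B (vtab F l H d (Suc d - B)) s) ` {1..min l (Suc d)})"
    by (simp add: bvalue_def e)
  also have "\<dots> = Max ((\<lambda>B. F h B (bvalue F l H (h+B)) s) ` {1..ell_h l H h})"
  proof -
    have "vtab F l H d (Suc d - B) = bvalue F l H (h+B)" if "B \<in> {1..min l (Suc d)}" for B
    proof -
      have "H + 1 - (h + B) = Suc d - B" using e(1) by simp
      then show ?thesis using that by (auto simp: bvalue_def intro!: vtab_stable)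
    qed
    then have "(\<lambda>B. F h B (vtab F l H d (Suc d - B)) s) ` {1..min l (Suc d)}
       = (\<lambda>B. F h B (bvalue F l H (h+B)) s) ` {1..min l (Suc d)}"
      by (intro image_cong) auto
    then show ?thesis using assms by (simp add: e(2) ell_h_def d_def Suc_diff_le)
  qed
  finally show ?thesis .
qed



lemma mink_set:
  fixes f g :: "nat \<Rightarrow> real"
  assumes A: "finite A" and d: "\<forall>i\<in>A. 0 \<le> g i - f i \<and> g i - f i \<le> M"
    and mf: "mf = (\<Sum>i\<in>A. f i)/card A" and mg: "mg = (\<Sum>i\<in>A. g i)/card A"
  shows "sqrt (\<Sum>i\<in>A. (f i - mf)\<^sup>2) \<le> sqrt (\<Sum>i\<in>A. (g i - mg)\<^sup>2) + sqrt (M * ((\<Sum>i\<in>A. g i) - (\<Sum>i\<in>A. f i)))"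
proof -
  have s: "(\<Sum>i\<in>A. f i) = card A * mf"
    using A mf by (cases "A = {}") auto
  have 1: "(\<Sum>i\<in>A. (f i - mf)\<^sup>2) \<le> (\<Sum>i\<in>A. (f i - mg)\<^sup>2)"
  proof -
    have "(\<Sum>i\<in>A. (f i - mg)\<^sup>2) = (\<Sum>i\<in>A. (f i - mf)\<^sup>2 + 2 * (mf - mg) * f i - 2 * (mf - mg) * mf + (mf - mg)\<^sup>2)"
      by (rule sum.cong) (auto simp: power2_eq_square algebra_simps)
    also have "\<dots> = (\<Sum>i\<in>A. (f i - mf)\<^sup>2) + 2 * (mf - mg) * (\<Sum>i\<in>A. f i) - card A * (2 * (mf - mg) * mf) + card A * (mf - mg)\<^sup>2"
      by (simp add: sum.distrib sum_subtractf sum_distrib_left)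
    also have "\<dots> = (\<Sum>i\<in>A. (f i - mf)\<^sup>2) + card A * (mf - mg)\<^sup>2"
      by (simp add: s algebra_simps)
    finally show ?thesis by simp
  qed
  have 2: "sqrt (\<Sum>i\<in>A. (f i - mg)\<^sup>2) = L2_set (\<lambda>i. (g i - mg) + (-(g i - f i))) A"
    unfolding L2_set_def by (rule arg_cong[where f=sqrt], rule sum.cong) (auto simp: power2_eq_square algebra_simps)
  have 3: "L2_set (\<lambda>i. -(g i - f i)) A \<le> sqrt (M * ((\<Sum>i\<in>A. g i) - (\<Sum>i\<in>A. f i)))"
  proof -
    have "(\<Sum>i\<in>A. (-(g i - f i))\<^sup>2) \<le> (\<Sum>i\<in>A. M * (g i - f i))"
    proof (rule sum_mono)
      fix i assume "i \<in> A"
      then have "0 \<le> g i - f i" "g i - f i \<le> M" using d by auto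
      then have "(g i - f i) * (g i - f i) \<le> M * (g i - f i)" by (simp add: mult_right_mono)
      then show "(-(g i - f i))\<^sup>2 \<le> M * (g i - f i)" by (simp only: power2_minus power2_eq_square)
    qed
    then show ?thesis unfolding L2_set_def by (simp add: sum_distrib_left[symmetric] sum_subtractf)
  qed
  have "sqrt (\<Sum>i\<in>A. (f i - mf)\<^sup>2) \<le> sqrt (\<Sum>i\<in>A. (f i - mg)\<^sup>2)" using 1 by simp
  also have "\<dots> \<le> L2_set (\<lambda>i. g i - mg) A + L2_set (\<lambda>i. -(g i - f i)) A"
    unfolding 2 by (rule L2_set_triangle_ineq)
  also have "\<dots> \<le> sqrt (\<Sum>i\<in>A. (g i - mg)\<^sup>2) + sqrt (M * ((\<Sum>i\<in>A. g i) - (\<Sum>i\<in>A. f i)))"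
    using 3 by (simp add: L2_set_def)
  finally show ?thesis .
qed

lemma emp_sum: "emp f xs = (\<Sum>i\<in>{0..<length xs}. f (xs!i)) / length xs"
  unfolding emp_def by (simp add: sum_list_sum_nth)

lemma empvar_sqrt:
  fixes f g :: "'i \<Rightarrow> real"
  assumes d: "\<forall>x\<in>set xs. 0 \<le> g x - f x \<and> g x - f x \<le> M"
  shows "sqrt (empVar f xs) \<le> sqrt (empVar g xs) + sqrt (M * (emp g xs - emp f xs))"
proof (cases "xs = []")
  case True
  then show ?thesis by (simp add: empVar_def emp_def)
next
  case False
  define m where "m = length xs"
  define A where "A = {0..<m}"
  have m: "m > 0" using False by (simp add: m_def)
  have cA: "card A = m" by (simp add: A_def)
  let ?F = "\<lambda>i. f (xs!i)" and ?G = "\<lambda>i. g (xs!i)"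
  have ef: "emp f xs = (\<Sum>i\<in>A. ?F i)/card A" by (simp add: emp_sum A_def m_def)
  have eg: "emp g xs = (\<Sum>i\<in>A. ?G i)/card A" by (simp add: emp_sum A_def m_def)
  have dd: "\<forall>i\<in>A. 0 \<le> ?G i - ?F i \<and> ?G i - ?F i \<le> M" using d by (auto simp: A_def m_def)
  have key: "sqrt (\<Sum>i\<in>A. (?F i - emp f xs)\<^sup>2) \<le> sqrt (\<Sum>i\<in>A. (?G i - emp g xs)\<^sup>2) + sqrt (M * ((\<Sum>i\<in>A. ?G i) - (\<Sum>i\<in>A. ?F i)))"
    by (rule mink_set[OF _ dd ef eg]) (simp add: A_def)
  have vf: "empVar f xs = (\<Sum>i\<in>A. (?F i - emp f xs)\<^sup>2) / m"
    unfolding empVar_def by (subst emp_sum) (simp add: A_def m_def)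
  have vg: "empVar g xs = (\<Sum>i\<in>A. (?G i - emp g xs)\<^sup>2) / m"
    unfolding empVar_def by (subst emp_sum) (simp add: A_def m_def)
  have dm: "M * (emp g xs - emp f xs) = M * ((\<Sum>i\<in>A. ?G i) - (\<Sum>i\<in>A. ?F i)) / m"
    using m by (simp add: ef eg cA diff_divide_distrib[symmetric])
  have sm: "sqrt (real m) > 0" using m by simp
  show ?thesis unfolding vf vg dm real_sqrt_divide
    using divide_right_mono[OF key, of "sqrt (real m)"] sm by (simp add: add_divide_distrib)
qed



lemma arith_key:
  fixes Q ef eg vs vf vg L n H :: real
  assumes L: "0 \<le> L" and n: "0 < n" and H: "0 \<le> H" and vs: "0 \<le> vs" and vg: "0 \<le> vg"
    and e: "ef \<le> eg"
    and i: "Q - ef \<le> sqrt (2 * vs * L / n) + H * L / n"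
    and ii: "sqrt vs \<le> sqrt vf + 4 * H * sqrt (L / n)"
    and iii: "sqrt vf \<le> sqrt vg + sqrt (H * (eg - ef))"
  shows "Q \<le> eg + (sqrt (8 * vg * L / n) + 11 * H * L / n)"
proof -
  define a where "a = sqrt (L / n)"
  define r where "r = sqrt (2::real)"
  define u where "u = sqrt vs"
  define w where "w = sqrt vg"
  define z where "z = sqrt (H * (eg - ef))"
  have a0: "0 \<le> a" and aa: "a * a = L / n" using L n by (auto simp: a_def)
  have r0: "0 \<le> r" and r15: "r \<le> 3/2"
  proof -
    show "0 \<le> r" by (simp add: r_def)
    have "sqrt (2::real) \<le> sqrt ((3/2)^2)" by (simp add: power2_eq_square)
    then show "r \<le> 3/2" by (simp add: r_def)
  qed
  have w0: "0 \<le> w" using vg by (simp add: w_def)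
  have z0: "0 \<le> z" and zz: "z * z = H * (eg - ef)" using H e by (auto simp: z_def)
  have s1: "sqrt (2 * vs * L / n) = r * u * a"
    by (simp add: r_def u_def a_def real_sqrt_mult[symmetric] real_sqrt_divide[symmetric] mult.assoc)
  have s2: "sqrt (8 * vg * L / n) = 2 * r * w * a"
  proof -
    have "sqrt (8::real) = 2 * sqrt 2"
      by (metis real_sqrt_four real_sqrt_mult mult.commute num_double numeral_times_numeral)
    moreover have "sqrt (8 * vg * L / n) = sqrt 8 * (sqrt vg * sqrt (L/n))"
      by (metis real_sqrt_mult mult.assoc times_divide_eq_right)
    ultimately show ?thesis by (simp add: r_def w_def a_def)
  qed
  define p where "p = r * a"
  define q where "q = H * (a * a)"
  have HL: "H * L / n = q" "11 * H * L / n = 11 * q" using aa by (simp_all add: q_def)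
  have i': "Q - ef \<le> p * u + q" using i unfolding s1 HL by (simp add: p_def mult.commute mult.left_commute)
  have s2': "sqrt (8 * vg * L / n) = 2 * (p * w)" unfolding s2 by (simp add: p_def)
  have ii': "u \<le> sqrt vf + 4 * H * a" using ii by (simp add: u_def a_def)
  have "p * u \<le> p * (w + z + 4 * H * a)"
    using ii' iii r0 a0 by (intro mult_left_mono) (auto simp: w_def z_def p_def)
  then have F1: "p * u \<le> p * w + p * z + 4 * H * a * p" by (simp add: algebra_simps)
  have F2: "p * z \<le> (eg - ef) + q / 2"
  proof -
    have "(r * a * z)^2 = 2 * (a * a) * (z * z)"
      by (simp add: power2_eq_square r_def algebra_simps)
    then have "(r * a * z)^2 = 2 * (a * a) * (H * (eg - ef))" by (simp only: zz)
    also have "\<dots> \<le> ((eg - ef) + H * (a * a) / 2)^2"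
      using sum_power2_ge_zero[of "(eg - ef) - H * (a * a) / 2" 0]
      by (simp add: power2_eq_square algebra_simps)
    finally have sq: "(r * a * z)^2 \<le> ((eg - ef) + H * (a * a) / 2)^2" .
    have "0 \<le> (eg - ef) + H * (a * a) / 2" using H e by simp
    then have "r * a * z \<le> (eg - ef) + H * (a * a) / 2" using sq by (rule power2_le_imp_le[rotated])
    then show ?thesis unfolding p_def q_def by simp
  qed
  have F3: "4 * H * a * p \<le> 6 * q"
  proof -
    have "4 * H * (a * a) * r \<le> 4 * H * (a * a) * (3/2)"
      using r15 H a0 by (intro mult_left_mono) auto
    then show ?thesis by (simp add: algebra_simps p_def q_def)
  qed
  have F4: "0 \<le> p * w" using r0 a0 w0 by (simp add: p_def)
  have F5: "0 \<le> q" using H a0 by (simp add: q_def)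
  show ?thesis unfolding s2' HL using i' F1 F2 F3 F4 F5 by linarith
qed



lemma AE_rew:
  fixes D :: "nat \<Rightarrow> ('s::finite, 'a::finite) step_real measure"
  assumes ps: "\<And>t. t \<in> {1..H} \<Longrightarrow> prob_space (D t)"
    and ae: "\<And>t s a. t \<in> {1..H} \<Longrightarrow> AE x in D t. fst (x s a) \<in> {0..1}"
    and h: "1 \<le> h" "h + B \<le> H + 1"
  shows "AE I in Idist D h B. \<forall>t\<in>{h..<h+B}. \<forall>x a. fst (I t x a) \<in> {0..1}"
  unfolding Idist_def
proof (rule eventually_ball_finite, simp, rule ballI)
  fix t assume t: "t \<in> {h..<h+B}"
  then have tH: "t \<in> {1..H}" using h by auto
  have "AE y in D t. \<forall>x a. fst (y x a) \<in> {0..1}"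
    by (intro eventually_all_finite ae[OF tH])
  then show "AE I in PiM {h..<h+B} D. \<forall>x a. fst (I t x a) \<in> {0..1}"
    using h by (intro AE_PiM_component[OF ps t]) auto
qed

lemma integral_bounds:
  fixes f :: "_ \<Rightarrow> real"
  assumes "prob_space M" "AE x in M. 0 \<le> f x \<and> f x \<le> c" "0 \<le> c"
  shows "0 \<le> integral\<^sup>L M f \<and> integral\<^sup>L M f \<le> c"
proof
  show "0 \<le> integral\<^sup>L M f" using assms(2) by (intro integral_nonneg_AE) auto
  show "integral\<^sup>L M f \<le> c"
  proof (cases "integrable M f")
    case True
    interpret prob_space M by fact
    have "integral\<^sup>L M f \<le> integral\<^sup>L M (\<lambda>_. c)"
      using assms(2) True by (intro integral_mono_AE) auto
    then show ?thesis using prob_space by simp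
  qed (simp add: not_integrable_integral_eq assms)
qed

lemma emp_mono: "(\<And>x. x \<in> set xs \<Longrightarrow> f x \<le> g x) \<Longrightarrow> emp f xs \<le> emp g xs"
  unfolding emp_def by (intro divide_right_mono sum_list_mono) auto

lemma emp_nonneg: "(\<And>x. x \<in> set xs \<Longrightarrow> 0 \<le> f x) \<Longrightarrow> 0 \<le> emp f xs"
  unfolding emp_def by (intro divide_nonneg_nonneg sum_list_nonneg) auto

lemma empVar_nonneg: "0 \<le> empVar f xs"
  unfolding empVar_def by (rule emp_nonneg) simp

lemma ge1_mult: "1 \<le> (a::real) \<Longrightarrow> 1 \<le> b \<Longrightarrow> 1 \<le> a * b"
  using mult_mono[of 1 a 1 b] by simp

lemma Lk_nonneg:
  assumes "k \<ge> 1" "H \<ge> 1" "l \<ge> 1" "0 < \<delta>" "\<delta> < 1" "S \<ge> 1"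
  shows "0 \<le> Lk S H l k \<delta>"
proof -
  have "1 \<le> 18 * real S * real H * real l * real k ^ 3 * real (k + 1)"
    using assms by (intro ge1_mult) (auto simp: one_le_power)
  then have "1 \<le> 18 * real S * real H * real l * real k ^ 3 * real (k + 1) / \<delta>"
    using assms by (simp add: le_divide_eq)
  then show ?thesis unfolding Lk_def by simp
qed



lemma step:
  fixes D :: "nat \<Rightarrow> ('s::finite, 'a::finite) step_real measure"
    and obs :: "nat \<Rightarrow> nat \<Rightarrow> 's \<Rightarrow> nat \<Rightarrow> ('s, 'a) lk list"
    and H l :: nat and \<delta> :: real
  assumes HH: "H \<ge> 1" and ll: "l \<ge> 1" and d0: "0 < \<delta>" and d1: "\<delta> < 1"
    and ps: "\<And>t. t \<in> {1..H} \<Longrightarrow> prob_space (D t)"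
    and ae: "\<And>t s a. t \<in> {1..H} \<Longrightarrow> AE x in D t. fst (x s a) \<in> {0..1}"
    and G: "G1 D obs l H \<delta>" and k: "k \<ge> 1" and h: "1 \<le> h" "h \<le> H"
    and IH: "\<And>B s. B \<in> {1..ell_h l H h} \<Longrightarrow>
      0 \<le> Vstar D l H (h+B) s \<and> Vstar D l H (h+B) s \<le> real (H+1-(h+B))
      \<and> Vstar D l H (h+B) s \<le> Vbar obs l H \<delta> k (h+B) s \<and> Vbar obs l H \<delta> k (h+B) s \<le> real (H+1-(h+B))"
  shows "0 \<le> Vstar D l H h s \<and> Vstar D l H h s \<le> real (H+1-h)
      \<and> Vstar D l H h s \<le> Vbar obs l H \<delta> k h s \<and> Vbar obs l H \<delta> k h s \<le> real (H+1-h)"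
proof -
  let ?E = "{1..ell_h l H h}"
  have Efin: "finite ?E" and Ene: "?E \<noteq> {}" using ll h by (auto simp: ell_h_def)
  have VsR: "Vstar D l H h s = Max ((\<lambda>B. Qstar D l H h s B) ` ?E)"
    unfolding Qstar_def Vstar_def by (rule bvalue_rec[OF h])
  have VbR: "Vbar obs l H \<delta> k h s = Max ((\<lambda>B. Qbar_of obs l H \<delta> k h B (Vbar obs l H \<delta> k (h+B)) s) ` ?E)"
    unfolding Vbar_def by (rule bvalue_rec[OF h])
  have rH: "real H - real h + 1 = real (H+1-h)" using h by (simp add: of_nat_diff)
  have QbB: "Qbar_of obs l H \<delta> k h B W s \<le> real (H+1-h)" for B W
    unfolding Qbar_of_def rH by simp
  have QB: "0 \<le> Qstar D l H h s B \<and> Qstar D l H h s B \<le> real (H+1-h)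
     \<and> Qstar D l H h s B \<le> Qbar_of obs l H \<delta> k h B (Vbar obs l H \<delta> k (h+B)) s" if B: "B \<in> ?E" for B
  proof -
    have hB: "h + B \<le> H + 1" and B1: "1 \<le> B" using B h by (auto simp: ell_h_def)
    define Vs where "Vs = Vstar D l H (h+B)"
    define Vb where "Vb = Vbar obs l H \<delta> k (h+B)"
    have Vs0: "0 \<le> Vs x" and VsH: "Vs x \<le> real (H+1-(h+B))" and VsVb: "Vs x \<le> Vb x"
      and VbH: "Vb x \<le> real (H+1-(h+B))" for x
      using IH[OF B, of x] by (auto simp: Vs_def Vb_def)
    have psI: "prob_space (Idist D h B)"
      unfolding Idist_def using h hB by (intro prob_space_PiM ps) auto
    have sumB: "real B + real (H+1-(h+B)) = real (H+1-h)" using hB by (simp add: of_nat_diff)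
    have AEb: "AE I in Idist D h B. 0 \<le> lkQ I h B Vs s \<and> lkQ I h B Vs s \<le> real (H+1-h)"
    proof -
      have AEr: "AE I in Idist D h B. \<forall>t\<in>{h..<h+B}. \<forall>x a. fst (I t x a) \<in> {0..1}"
        by (rule AE_rew) (use ps ae h hB in auto)
      then show ?thesis
    proof eventually_elim
      case (elim I)
      have "0 \<le> lkQ I h B Vs s" using elim by (intro lkQ_lower Vs0) auto
      moreover have "lkQ I h B Vs s \<le> real B + real (H+1-(h+B))"
        using elim by (intro lkQ_upper VsH) auto
      ultimately show ?case using sumB by simp
    qed
    qed
    have Qb: "0 \<le> Qstar D l H h s B \<and> Qstar D l H h s B \<le> real (H+1-h)"
      unfolding Qstar_def Vs_def[symmetric] by (rule integral_bounds[OF psI AEb]) simp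
    define xs where "xs = obs k h s B"
    define n where "n = real (max (length xs) 1)"
    define L where "L = Lk CARD('s) H l k \<delta>"
    define f where "f = (\<lambda>I :: ('s, 'a) lk. lkQ I h B Vs s)"
    define g where "g = (\<lambda>I :: ('s, 'a) lk. lkQ I h B Vb s)"
    have hH: "h \<in> {1..H}" using h by simp
    have G': "\<bar>Qstar D l H h s B - emp f xs\<bar> \<le> sqrt (2 * VarStar D l H h s B * L / n) + real H * L / n
        \<and> \<bar>sqrt (empVar f xs) - sqrt (VarStar D l H h s B)\<bar> \<le> 4 * real H * sqrt (L / n)"
    proof -
      note G0 = G[unfolded G1_def, rule_format, OF k hH B, unfolded Let_def]
      show ?thesis unfolding xs_def n_def L_def f_def Vs_def
        using G0[of s] by (elim conjE) (intro conjI)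
    qed
    have Lnn: "0 \<le> L" unfolding L_def
      using k HH ll d0 d1 by (intro Lk_nonneg) (auto simp: Suc_le_eq)
    have n0: "0 < n" by (simp add: n_def)
    have vs0: "0 \<le> VarStar D l H h s B" unfolding VarStar_def by (intro integral_nonneg_AE) auto
    have fg: "f I \<le> g I" for I unfolding f_def g_def by (intro lkQ_mono VsVb)
    have gfH: "g I - f I \<le> real H" for I
    proof -
      have "Vb x \<le> Vs x + real H" for x
      proof -
        have "real (H+1-(h+B)) \<le> real H" using h B1 by simp
        then show ?thesis using VbH[of x] Vs0[of x] by linarith
      qed
      then show ?thesis unfolding f_def g_def by (rule lkQ_diff)
    qed
    have efg: "emp f xs \<le> emp g xs" by (rule emp_mono) (rule fg)
    have iii: "sqrt (empVar f xs) \<le> sqrt (empVar g xs) + sqrt (real H * (emp g xs - emp f xs))"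
      by (rule empvar_sqrt) (use fg gfH in auto)
    have "Qstar D l H h s B \<le> emp g xs + (sqrt (8 * empVar g xs * L / n) + 11 * real H * L / n)"
      by (rule arith_key[OF Lnn n0 _ vs0 empVar_nonneg efg _ _ iii]) (use G' in auto)
    also have "\<dots> = emp g xs + bonus obs l H \<delta> k h s B Vb"
      unfolding bonus_def Let_def xs_def n_def L_def g_def ..
    finally have "Qstar D l H h s B \<le> emp g xs + bonus obs l H \<delta> k h s B Vb" .
    then have "Qstar D l H h s B \<le> Qbar_of obs l H \<delta> k h B Vb s"
      using Qb unfolding Qbar_of_def rH g_def xs_def by simp
    then show ?thesis using Qb by (simp add: Vb_def)
  qed
  show ?thesis
  proof (intro conjI)
    obtain B0 where B0: "B0 \<in> ?E" using Ene by blast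
    show "0 \<le> Vstar D l H h s"
    proof -
      have "Qstar D l H h s B0 \<le> Max ((\<lambda>B. Qstar D l H h s B) ` ?E)"
        using B0 Efin by (intro Max_ge) auto
      then show ?thesis unfolding VsR using QB[OF B0] by linarith
    qed
    show "Vstar D l H h s \<le> real (H+1-h)"
      unfolding VsR using QB Efin Ene by (subst Max_le_iff) auto
    show "Vbar obs l H \<delta> k h s \<le> real (H+1-h)"
      unfolding VbR using QbB Efin Ene by (subst Max_le_iff) auto
    show "Vstar D l H h s \<le> Vbar obs l H \<delta> k h s"
      unfolding VsR
    proof (subst Max_le_iff; (intro ballI)?)
      fix q assume "q \<in> (\<lambda>B. Qstar D l H h s B) ` ?E"
      then obtain B where B: "B \<in> ?E" and q: "q = Qstar D l H h s B" by auto
      have "q \<le> Qbar_of obs l H \<delta> k h B (Vbar obs l H \<delta> k (h+B)) s" using QB[OF B] q by simp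
      also have "\<dots> \<le> Vbar obs l H \<delta> k h s"
        unfolding VbR using B Efin by (intro Max_ge) auto
      finally show "q \<le> Vbar obs l H \<delta> k h s" .
    qed (use Efin Ene in auto)
  qed
qed


theorem lemma3:
  fixes D :: "nat \<Rightarrow> ('s::finite, 'a::finite) step_real measure"
    and obs :: "nat \<Rightarrow> nat \<Rightarrow> 's \<Rightarrow> nat \<Rightarrow> ('s, 'a) lk list"
    and H l :: nat and \<delta> :: real
  assumes "H \<ge> 1" and "l \<ge> 1" and "0 < \<delta>" and "\<delta> < 1"
    and "\<And>t. t \<in> {1..H} \<Longrightarrow> prob_space (D t)"
    and "\<And>t s a. t \<in> {1..H} \<Longrightarrow> (\<lambda>x. fst (x s a)) \<in> borel_measurable (D t)"
    and "\<And>t s a. t \<in> {1..H} \<Longrightarrow> (\<lambda>x. snd (x s a)) \<in> D t \<rightarrow>\<^sub>M count_space UNIV"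
    and "\<And>t s a. t \<in> {1..H} \<Longrightarrow> AE x in D t. fst (x s a) \<in> {0..1}"
    and "G1 D obs l H \<delta>"
  shows "(\<forall>k\<ge>1. \<forall>h\<in>{1..H}. \<forall>s. \<forall>B\<in>{1..ell_h l H h}. \<forall>I :: ('s, 'a) lk.
           lkQ I h B (Vstar D l H (h + B)) s \<le> lkQ I h B (Vbar obs l H \<delta> k (h + B)) s)
     \<and> (\<forall>k\<ge>1. \<forall>h\<in>{1..H}. \<forall>s. Vstar D l H h s \<le> Vbar obs l H \<delta> k h s)"
  proof -
  have main: "0 \<le> Vstar D l H (h) s \<and> Vstar D l H (h) s \<le> real (H+1-(h)) \<and> Vstar D l H (h) s \<le> Vbar obs l H \<delta> k (h) s \<and> Vbar obs l H \<delta> k (h) s \<le> real (H+1-(h))" if k: "k \<ge> 1" and h: "1 \<le> h" "h \<le> H+1" for k h s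
  proof -
    have "\<forall>h s. H+1-h = d \<longrightarrow> 1 \<le> h \<longrightarrow> h \<le> H+1 \<longrightarrow> (0 \<le> Vstar D l H (h) s \<and> Vstar D l H (h) s \<le> real (H+1-(h)) \<and> Vstar D l H (h) s \<le> Vbar obs l H \<delta> k (h) s \<and> Vbar obs l H \<delta> k (h) s \<le> real (H+1-(h)))" for d
    proof (induction d rule: less_induct)
      case (less d)
      show ?case
      proof (intro allI impI)
        fix h s assume hd: "H+1-h = d" and h1: "1 \<le> h" and hH: "h \<le> H+1"
        show "0 \<le> Vstar D l H (h) s \<and> Vstar D l H (h) s \<le> real (H+1-(h)) \<and> Vstar D l H (h) s \<le> Vbar obs l H \<delta> k (h) s \<and> Vbar obs l H \<delta> k (h) s \<le> real (H+1-(h))"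
        proof (cases "h = H+1")
          case True
          then show ?thesis by (simp add: Vstar_def Vbar_def bvalue_def)
        next
          case False
          then have hH': "h \<le> H" using hH by simp
          show ?thesis
          proof (rule step[OF assms(1-5) assms(8) assms(9) k h1 hH'])
            fix B s' assume B: "B \<in> {1..ell_h l H h}"
            then have "H+1-(h+B) < d" "1 \<le> h+B" "h+B \<le> H+1" using hd h1 hH' by (auto simp: ell_h_def)
            then show "0 \<le> Vstar D l H (h+B) s' \<and> Vstar D l H (h+B) s' \<le> real (H+1-(h+B)) \<and> Vstar D l H (h+B) s' \<le> Vbar obs l H \<delta> k (h+B) s' \<and> Vbar obs l H \<delta> k (h+B) s' \<le> real (H+1-(h+B))" using less.IH by blast
          qed
        qed
      qed
    qed
    then show ?thesis using h by blast
  qed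
  show ?thesis
  proof (intro conjI allI impI ballI)
    fix k h B :: nat and s :: 's and I :: "('s, 'a) lk"
    assume k: "k \<ge> 1" and h: "h \<in> {1..H}" and B: "B \<in> {1..ell_h l H h}"
    have "1 \<le> h + B" "h + B \<le> H + 1" using h B by (auto simp: ell_h_def)
    then have "\<And>x. Vstar D l H (h + B) x \<le> Vbar obs l H \<delta> k (h + B) x" using main[OF k] by blast
    then show "lkQ I h B (Vstar D l H (h + B)) s \<le> lkQ I h B (Vbar obs l H \<delta> k (h + B)) s"
      by (rule lkQ_mono)
  next
    fix k h :: nat and s :: 's
    assume k: "k \<ge> 1" and h: "h \<in> {1..H}"
    then show "Vstar D l H h s \<le> Vbar obs l H \<delta> k h s" using main[OF k, of h s] by simp
  qed
qed

end
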